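(* Let $I$ be a fuzzy implication satisfying $I(1,y)=y$ for all $y\in[0,1]$, and let $A$ be an aggregation function having $1$ as a left neutral element ($A(1,x)=x$ for all $x$). Then $I$ satisfies (A5) with $A$ if and only if for all nonempty sets $U,V$, all normal fuzzy sets $D$ on $U$ and $B$ on $V$, and all $x\in U$, $y\in V$, one has $A(D(x),I(D(x),B(y)))\le B(y)$.
   Context: Aggregation function: $A:[0,1]^2\to[0,1]$ non-decreasing in each variable with $A(0,0)=0$, $A(1,1)=1$. Fuzzy implication: $I:[0,1]^2\to[0,1]$ non-increasing in the first and non-decreasing in the second variable with $I(0,0)=I(1,1)=1$, $I(1,0)=0$. A fuzzy set on a nonempty set $U$ is a map $U\to[0,1]$, normal if it attains $1$. "$I$ satisfies (A5) with $A$" means: for all nonempty sets $U,V$, all normal fuzzy sets $D$ on $U$, $B$ on $V$ and every $y\in V$, $\sup_{x\in U}A(D(x),I(D(x),B(y)))=B(y)$. *)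

theory Defs
  imports Main "HOL.Real"
begin

definition unit_interval :: "real set" where
  "unit_interval = {0..1}"

definition aggregation_function :: "(real \<Rightarrow> real \<Rightarrow> real) \<Rightarrow> bool" where
  "aggregation_function A \<longleftrightarrow>
     (\<forall>x\<in>{0..1}. \<forall>y\<in>{0..1}. A x y \<in> {0..1}) \<and>
     (\<forall>x1\<in>{0..1}. \<forall>x2\<in>{0..1}. \<forall>y\<in>{0..1}. x1 \<le> x2 \<longrightarrow> A x1 y \<le> A x2 y) \<and>
     (\<forall>x\<in>{0..1}. \<forall>y1\<in>{0..1}. \<forall>y2\<in>{0..1}. y1 \<le> y2 \<longrightarrow> A x y1 \<le> A x y2) \<and>
     A 0 0 = 0 \<and> A 1 1 = 1"

definition fuzzy_implication :: "(real \<Rightarrow> real \<Rightarrow> real) \<Rightarrow> bool" where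
  "fuzzy_implication I \<longleftrightarrow>
     (\<forall>x\<in>{0..1}. \<forall>y\<in>{0..1}. I x y \<in> {0..1}) \<and>
     (\<forall>x1\<in>{0..1}. \<forall>x2\<in>{0..1}. \<forall>y\<in>{0..1}. x1 \<le> x2 \<longrightarrow> I x2 y \<le> I x1 y) \<and>
     (\<forall>x\<in>{0..1}. \<forall>y1\<in>{0..1}. \<forall>y2\<in>{0..1}. y1 \<le> y2 \<longrightarrow> I x y1 \<le> I x y2) \<and>
     I 0 0 = 1 \<and> I 1 1 = 1 \<and> I 1 0 = 0"

definition fuzzy_set_on :: "'a set \<Rightarrow> ('a \<Rightarrow> real) \<Rightarrow> bool" where
  "fuzzy_set_on U D \<longleftrightarrow> (\<forall>x\<in>U. D x \<in> {0..1})"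

definition normal_fuzzy_set_on :: "'a set \<Rightarrow> ('a \<Rightarrow> real) \<Rightarrow> bool" where
  "normal_fuzzy_set_on U D \<longleftrightarrow> fuzzy_set_on U D \<and> (\<exists>x\<in>U. D x = 1)"

text \<open>(A5) relative to universes of types 'a and 'b: all nonempty U :: 'a set, V :: 'b set.\<close>
definition satisfies_A5 ::
  "'a itself \<Rightarrow> 'b itself \<Rightarrow> (real \<Rightarrow> real \<Rightarrow> real) \<Rightarrow> (real \<Rightarrow> real \<Rightarrow> real) \<Rightarrow> bool" where
  "satisfies_A5 _ _ I A \<longleftrightarrow>
     (\<forall>(U::'a set) (V::'b set) D B y.
        U \<noteq> {} \<longrightarrow> V \<noteq> {} \<longrightarrow> normal_fuzzy_set_on U D \<longrightarrow> normal_fuzzy_set_on V B \<longrightarrow>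
        y \<in> V \<longrightarrow> (SUP x\<in>U. A (D x) (I (D x) (B y))) = B y)"

end

theory Submission
  imports Defs
begin

theorem proposition3p9:
  fixes I A :: "real \<Rightarrow> real \<Rightarrow> real"
  assumes "fuzzy_implication I"
    and "\<forall>y\<in>{0..1}. I 1 y = y"
    and "aggregation_function A"
    and "\<forall>x\<in>{0..1}. A 1 x = x"
  shows "satisfies_A5 TYPE('a) TYPE('b) I A \<longleftrightarrow>
    (\<forall>(U::'a set) (V::'b set) D B x y.
        U \<noteq> {} \<longrightarrow> V \<noteq> {} \<longrightarrow> normal_fuzzy_set_on U D \<longrightarrow> normal_fuzzy_set_on V B \<longrightarrow>
        x \<in> U \<longrightarrow> y \<in> V \<longrightarrow> A (D x) (I (D x) (B y)) \<le> B y)"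
proof -
  have Ir: "\<And>a b. a \<in> {0..1} \<Longrightarrow> b \<in> {0..1} \<Longrightarrow> I a b \<in> {0..1}"
    using assms(1) unfolding fuzzy_implication_def by blast
  have Ar: "\<And>a b. a \<in> {0..1} \<Longrightarrow> b \<in> {0..1} \<Longrightarrow> A a b \<in> {0..1}"
    using assms(3) unfolding aggregation_function_def by blast
  have bdd: "bdd_above ((\<lambda>x. A (D x) (I (D x) (B y))) ` U)"
    if "normal_fuzzy_set_on U D" "normal_fuzzy_set_on V B" "y \<in> V"
    for U :: "'a set" and V :: "'b set" and D B y
  proof (rule bdd_aboveI2[where M=1])
    fix x assume "x \<in> U"
    then have "D x \<in> {0..1}" "B y \<in> {0..1}" using that
      unfolding normal_fuzzy_set_on_def fuzzy_set_on_def by auto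
    then show "A (D x) (I (D x) (B y)) \<le> 1" using Ar Ir by auto
  qed
  show ?thesis
  proof
    assume h: "satisfies_A5 TYPE('a) TYPE('b) I A"
    show "\<forall>(U::'a set) (V::'b set) D B x y.
        U \<noteq> {} \<longrightarrow> V \<noteq> {} \<longrightarrow> normal_fuzzy_set_on U D \<longrightarrow> normal_fuzzy_set_on V B \<longrightarrow>
        x \<in> U \<longrightarrow> y \<in> V \<longrightarrow> A (D x) (I (D x) (B y)) \<le> B y"
    proof (intro allI impI)
      fix U :: "'a set" and V :: "'b set" and D B x y
      assume a: "U \<noteq> {}" "V \<noteq> {}" "normal_fuzzy_set_on U D" "normal_fuzzy_set_on V B"
        "x \<in> U" "y \<in> V"
      have "A (D x) (I (D x) (B y)) \<le> (SUP x\<in>U. A (D x) (I (D x) (B y)))"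
        by (rule cSUP_upper[OF a(5) bdd[OF a(3) a(4) a(6)]])
      also have "\<dots> = B y" using h a unfolding satisfies_A5_def by blast
      finally show "A (D x) (I (D x) (B y)) \<le> B y" .
    qed
  next
    assume h: "\<forall>(U::'a set) (V::'b set) D B x y.
        U \<noteq> {} \<longrightarrow> V \<noteq> {} \<longrightarrow> normal_fuzzy_set_on U D \<longrightarrow> normal_fuzzy_set_on V B \<longrightarrow>
        x \<in> U \<longrightarrow> y \<in> V \<longrightarrow> A (D x) (I (D x) (B y)) \<le> B y"
    show "satisfies_A5 TYPE('a) TYPE('b) I A"
      unfolding satisfies_A5_def
    proof (intro allI impI)
      fix U :: "'a set" and V :: "'b set" and D B y
      assume a: "U \<noteq> {}" "V \<noteq> {}" "normal_fuzzy_set_on U D" "normal_fuzzy_set_on V B"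
        "y \<in> V"
      obtain x0 where x0: "x0 \<in> U" "D x0 = 1" using a(3) unfolding normal_fuzzy_set_on_def by blast
      have By: "B y \<in> {0..1}" using a(4,5) unfolding normal_fuzzy_set_on_def fuzzy_set_on_def by blast
      have e: "A (D x0) (I (D x0) (B y)) = B y" using x0 By assms(2,4) by simp
      show "(SUP x\<in>U. A (D x) (I (D x) (B y))) = B y"
      proof (rule antisym)
        show "(SUP x\<in>U. A (D x) (I (D x) (B y))) \<le> B y"
          using h a by (intro cSUP_least) auto
        show "B y \<le> (SUP x\<in>U. A (D x) (I (D x) (B y)))"
          using cSUP_upper[OF x0(1) bdd[OF a(3) a(4) a(5)]] e by simp
      qed
    qed
  qed
qed

end
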